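(* Let $d\ge1$, $\alpha\in(0,2)$, and let $D\subset\mathbb{R}^d$ be a Borel set. For every $\gamma\in[0,2\alpha)$ there exists a constant $C_1=C_1(d,\alpha,\gamma)>1$ such that for all $(t,y,z)\in(0,\infty)\times D\times D$, $$\Big(1\wedge\frac{\delta_D(z)}{t^{1/\alpha}}\Big)^\gamma\int_0^{t/2}\psi_\gamma(s,z,y)q(s,z,y)\,ds\le C_1\Big(1\wedge\frac{\delta_D(y)}{t^{1/\alpha}}\Big)^\gamma\int_0^{t/2}\Big(1\wedge\frac{\delta_D(z)}{s^{1/\alpha}}\Big)^\gamma q(s,z,y)\,ds.$$
   Context: $\delta_D(x)$ is the Euclidean distance from $x$ to $D^c$; $q(t,x,y):=t^{-d/\alpha}\wedge\frac{t}{|x-y|^{d+\alpha}}$; $\psi_\gamma(t,x,y):=\big(1\wedge\frac{\delta_D(x)}{t^{1/\alpha}}\big)^\gamma\big(1\wedge\frac{\delta_D(y)}{t^{1/\alpha}}\big)^\gamma$. *)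

theory Defs
  imports "HOL-Analysis.Analysis"
begin

(* delta_D(x): Euclidean distance from x to the complement of D.
   If the complement is empty, the distance is +infinity, so the ratio
   min 1 (delta_D(x)/t^(1/alpha)) equals 1. *)
definition bdry_ratio :: "real \<Rightarrow> 'a::euclidean_space set \<Rightarrow> real \<Rightarrow> 'a \<Rightarrow> real" where
  "bdry_ratio \<alpha> D t x =
     (if - D = {} then 1 else min 1 (infdist x (- D) / t powr (1 / \<alpha>)))"

(* q(t,x,y) = t^{-d/alpha} \<wedge> t/|x-y|^{d+alpha}, with d = DIM('a);
   for x = y the second term is +infinity. *)
definition qker :: "real \<Rightarrow> real \<Rightarrow> 'a::euclidean_space \<Rightarrow> 'a \<Rightarrow> real" where
  "qker \<alpha> t x y =
     (if x = y then t powr (- real DIM('a) / \<alpha>)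
      else min (t powr (- real DIM('a) / \<alpha>)) (t / norm (x - y) powr (real DIM('a) + \<alpha>)))"

(* real power with the convention 0^0 = 1 (Isabelle's powr has 0 powr 0 = 0) *)
definition rpow :: "real \<Rightarrow> real \<Rightarrow> real" where
  "rpow x \<gamma> = (if \<gamma> = 0 then 1 else x powr \<gamma>)"

definition psi :: "real \<Rightarrow> real \<Rightarrow> 'a::euclidean_space set \<Rightarrow> real \<Rightarrow> 'a \<Rightarrow> 'a \<Rightarrow> real" where
  "psi \<alpha> \<gamma> D t x y = rpow (bdry_ratio \<alpha> D t x) \<gamma> * rpow (bdry_ratio \<alpha> D t y) \<gamma>"

end

theory Submission imports Defs begin

lemma int_powr:
  fixes p m :: real assumes "p < 2" "0 < m"
  shows "(\<integral>\<^sup>+ s\<in>{0<..<m}. ennreal (s powr (1-p)) \<partial>lborel) = ennreal (m powr (2-p)/(2-p))"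
proof -
  have "((\<lambda>x. x powr (1-p)) has_integral (m powr ((1-p)+1)/((1-p)+1))) {0..m}"
    by (rule has_integral_powr_from_0) (use assms in auto)
  moreover have "(1-p)+1 = 2-p" by simp
  ultimately have "((\<lambda>x. x powr (1-p)) has_integral (m powr (2-p)/(2-p))) {0<..<m}"
    by (simp add: has_integral_Icc_iff_Ioo)
  from nn_integral_has_integral_lebesgue[OF _ this]
  have "(\<integral>\<^sup>+ x. ennreal (indicator {0<..<m} x * x powr (1-p)) \<partial>lborel) = ennreal (m powr (2-p)/(2-p))"
    by simp
  moreover have "\<And>x. ennreal (x powr (1-p)) * indicator {0<..<m} x = ennreal (indicator {0<..<m} x * x powr (1-p))"
    by (auto split: split_indicator)
  ultimately show ?thesis by simp
qed

lemma int_lin: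
  fixes m :: real assumes "0 < m"
  shows "(\<integral>\<^sup>+ s\<in>{0<..<m}. ennreal s \<partial>lborel) = ennreal (m^2/2)"
proof -
  have "(\<integral>\<^sup>+ s\<in>{0<..<m}. ennreal s \<partial>lborel) = (\<integral>\<^sup>+ s\<in>{0<..<m}. ennreal (s powr (1-0)) \<partial>lborel)"
    by (rule nn_integral_cong) (auto split: split_indicator)
  also have "\<dots> = ennreal (m powr (2-0)/(2-0))" by (rule int_powr) (use assms in auto)
  also have "m powr (2-0) = m^2" using assms by (simp add: powr_numeral)
  finally show ?thesis by simp
qed

lemma ennreal_le_2x: "(x::ennreal) \<le> 2 * x"
  by (metis add_increasing2 mult_2 order_refl zero_le)

lemma powr_le_one': "0 \<le> (x::real) \<Longrightarrow> x \<le> 1 \<Longrightarrow> 0 < g \<Longrightarrow> x powr g \<le> 1"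
  using powr_mono2[of g x 1] by simp

lemma ennreal_le_cx: "1 \<le> c \<Longrightarrow> (x::ennreal) \<le> ennreal c * x"
proof -
  assume "1 \<le> c"
  hence "ennreal 1 \<le> ennreal c" by (rule ennreal_leI)
  from mult_right_mono[OF this, of x] show ?thesis by simp
qed

theorem lemma2p2:
  fixes \<alpha> \<gamma> :: real
  assumes "0 < \<alpha>" "\<alpha> < 2" "0 \<le> \<gamma>" "\<gamma> < 2 * \<alpha>"
  shows "\<exists>C1 > 1. \<forall>(D :: 'a::euclidean_space set) \<in> sets borel. \<forall>t > 0. \<forall>y \<in> D. \<forall>z \<in> D.
     ennreal (rpow (bdry_ratio \<alpha> D t z) \<gamma>) *
       (\<integral>\<^sup>+ s \<in> {0<..<t/2}. ennreal (psi \<alpha> \<gamma> D s z y * qker \<alpha> s z y) \<partial>lborel)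
     \<le> ennreal (C1 * rpow (bdry_ratio \<alpha> D t y) \<gamma>) *
       (\<integral>\<^sup>+ s \<in> {0<..<t/2}. ennreal (rpow (bdry_ratio \<alpha> D s z) \<gamma> * qker \<alpha> s z y) \<partial>lborel)"
proof (cases "\<gamma> = 0")
  case True
  show ?thesis
  proof (intro exI[of _ 2] conjI ballI allI impI)
    fix D :: "'a set" and t :: real and y z :: 'a
    show "ennreal (rpow (bdry_ratio \<alpha> D t z) \<gamma>) *
       (\<integral>\<^sup>+ s \<in> {0<..<t/2}. ennreal (psi \<alpha> \<gamma> D s z y * qker \<alpha> s z y) \<partial>lborel)
     \<le> ennreal (2 * rpow (bdry_ratio \<alpha> D t y) \<gamma>) *
       (\<integral>\<^sup>+ s \<in> {0<..<t/2}. ennreal (rpow (bdry_ratio \<alpha> D s z) \<gamma> * qker \<alpha> s z y) \<partial>lborel)"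
      using True by (simp add: rpow_def psi_def ennreal_le_2x)
  qed simp
next
  case False
  hence g0: "0 < \<gamma>" using assms by simp
  define p where "p = \<gamma> / \<alpha>"
  have p0: "0 < p" and p2: "p < 2" using assms g0 by (auto simp: p_def field_simps)
  define d where "d = real DIM('a)"
  define K where "K = 2 powr p * 2 * 2 powr (d+\<alpha>) / (2-p)"
  have K0: "0 \<le> K" using p2 by (simp add: K_def)
  define C1 where "C1 = 2 powr \<gamma> + 1 + K"
  have C1g: "2 powr \<gamma> \<le> C1" "1 + K \<le> C1" "1 \<le> C1" using K0 g0 by (auto simp: C1_def)
  have rp: "\<And>x. rpow x \<gamma> = x powr \<gamma>" using False by (simp add: rpow_def)
  show ?thesis
  proof (intro exI[of _ C1] conjI ballI allI impI)
    show "1 < C1" using K0 by (simp add: C1_def add_pos_nonneg)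
    fix D :: "'a set" and t :: real and y z :: 'a
    assume "D \<in> sets borel" and t0: "0 < t" and "y \<in> D" "z \<in> D"
    show "ennreal (rpow (bdry_ratio \<alpha> D t z) \<gamma>) *
       (\<integral>\<^sup>+ s \<in> {0<..<t/2}. ennreal (psi \<alpha> \<gamma> D s z y * qker \<alpha> s z y) \<partial>lborel)
     \<le> ennreal (C1 * rpow (bdry_ratio \<alpha> D t y) \<gamma>) *
       (\<integral>\<^sup>+ s \<in> {0<..<t/2}. ennreal (rpow (bdry_ratio \<alpha> D s z) \<gamma> * qker \<alpha> s z y) \<partial>lborel)"
    proof (cases "- D = {}")
      case True
      then show ?thesis using True C1g
        by (simp add: rp psi_def bdry_ratio_def ennreal_le_cx)
    next
      case nonempty: False
      define dz where "dz = infdist z (-D)"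
      define dy where "dy = infdist y (-D)"
      define A where "A = (\<lambda>s. min 1 (dz / s powr (1/\<alpha>)) powr \<gamma>)"
      define B where "B = (\<lambda>s. min 1 (dy / s powr (1/\<alpha>)) powr \<gamma>)"
      define Q where "Q = (\<lambda>s. qker \<alpha> s z y)"
      define S where "S = {0<..<t/2}"
      have dz0: "0 \<le> dz" and dy0: "0 \<le> dy" by (auto simp: dz_def dy_def infdist_nonneg)
      have A01: "0 \<le> A s" "A s \<le> 1" for s
        using dz0 g0 by (auto simp: A_def intro!: powr_le_one')
      have B01: "0 \<le> B s" "B s \<le> 1" for s
        using dy0 g0 by (auto simp: B_def intro!: powr_le_one')
      have Q0: "0 \<le> Q s" if "0 \<le> s" for s using that by (auto simp: Q_def qker_def)
      have main: "ennreal (A t) * (\<integral>\<^sup>+ s \<in> S. ennreal (A s * B s * Q s) \<partial>lborel)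
          \<le> ennreal (C1 * B t) * (\<integral>\<^sup>+ s \<in> S. ennreal (A s * Q s) \<partial>lborel)"
      proof (cases "t powr (1/\<alpha>) \<le> dy \<or> dz \<le> 2 * dy")
        case True
        have "A t \<le> 2 powr \<gamma> * B t"
        proof (cases "t powr (1/\<alpha>) \<le> dy")
          case True
          have "dy / t powr (1/\<alpha>) \<ge> 1" using True t0 by simp
          hence "B t = 1" by (simp add: B_def)
          thus ?thesis using A01[of t] g0 by (simp add: order_trans[OF _ ge_one_powr_ge_zero])
        next
          case False
          hence dzy: "dz \<le> 2 * dy" using \<open>t powr (1/\<alpha>) \<le> dy \<or> dz \<le> 2 * dy\<close> by simp
          have tp: "0 < t powr (1/\<alpha>)" using t0 by simp
          have "min 1 (dz / t powr (1/\<alpha>)) \<le> 2 * min 1 (dy / t powr (1/\<alpha>))"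
          proof -
            have "dz / t powr (1/\<alpha>) \<le> 2 * (dy / t powr (1/\<alpha>))"
              using dzy tp by (simp add: divide_right_mono)
            thus ?thesis by (simp add: min_def)
          qed
          hence "A t \<le> (2 * min 1 (dy / t powr (1/\<alpha>))) powr \<gamma>"
            unfolding A_def using dz0 tp by (intro powr_mono2) (auto simp: g0 less_imp_le)
          also have "\<dots> = 2 powr \<gamma> * B t" unfolding B_def using dy0 tp
            by (subst powr_mult) auto
          finally show ?thesis .
        qed
        hence "ennreal (A t) \<le> ennreal (C1 * B t)"
          using C1g B01[of t] by (intro ennreal_leI) (metis mult_right_mono order_trans)
        moreover have "(\<integral>\<^sup>+ s \<in> S. ennreal (A s * B s * Q s) \<partial>lborel) \<le> (\<integral>\<^sup>+ s \<in> S. ennreal (A s * Q s) \<partial>lborel)"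
        proof (intro nn_integral_mono)
          fix s
          have "s \<in> S \<Longrightarrow> A s * B s * Q s \<le> A s * Q s"
            using A01[of s] B01[of s] Q0[of s] unfolding S_def
            by (intro mult_right_mono) (auto simp: mult_left_le)
          thus "ennreal (A s * B s * Q s) * indicator S s \<le> ennreal (A s * Q s) * indicator S s"
            by (auto split: split_indicator intro: ennreal_leI)
        qed
        ultimately show ?thesis by (intro mult_mono) auto
      next
        case False
        hence dyt: "dy < t powr (1/\<alpha>)" and dzy: "2*dy < dz" by auto
        have tp: "0 < t powr (1/\<alpha>)" using t0 by simp
        define r where "r = dist z y"
        have "dz \<le> dy + r" unfolding dz_def dy_def r_def by (rule infdist_triangle)
        hence r2: "dz < 2*r" and rpos: "0 < r" using dzy dy0 by auto
        have zy: "z \<noteq> y" using rpos r_def by auto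
        define L where "L = r powr (d+\<alpha>)"
        define M where "M = (2*r) powr (d+\<alpha>)"
        have dpos: "0 \<le> d" by (simp add: d_def)
        have L0: "0 < L" using rpos by (simp add: L_def)
        have LM: "L \<le> M" unfolding L_def M_def using rpos dpos assms by (intro powr_mono2) auto
        have M2: "M = 2 powr (d+\<alpha>) * L" unfolding M_def L_def using rpos by (simp add: powr_mult)
        have M0: "0 < M" using L0 LM by simp
        have Qeq: "Q s = min (s powr (- d/\<alpha>)) (s / L)" for s
          using zy by (simp add: Q_def qker_def d_def L_def r_def dist_norm)
        define T where "T = t/2"
        have ST: "S = {0<..<T}" by (simp add: S_def T_def)
        define m where "m = min T (dz powr \<alpha>)"
        have dzpos: "0 < dz" using dzy dy0 by simp
        have m0: "0 < m" using t0 dzpos by (simp add: m_def T_def)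
        have mT: "m \<le> T" by (simp add: m_def)
        define k1 where "k1 = 2 powr p * m powr p / L"
        have k10: "0 \<le> k1" using L0 by (simp add: k1_def)
        have Bt: "B t = (dy / t powr (1/\<alpha>)) powr \<gamma>" using dyt tp by (simp add: B_def)
        have P1: "A t * (A s * B s * Q s) \<le> B t * (A s * Q s + indicator {0<..<m} s * (k1 * s powr (1-p)))"
          if sS: "s \<in> S" for s
        proof -
          have s0: "0 < s" and sT: "s < T" using sS ST by auto
          have sp: "0 < s powr (1/\<alpha>)" using s0 by simp
          have Q0s: "0 \<le> Q s" using Q0 s0 by simp
          have Qle: "Q s \<le> s / L" by (simp add: Qeq)
          have tsa: "(t/s) powr (1/\<alpha>) = t powr (1/\<alpha>) / s powr (1/\<alpha>)"
            using t0 s0 by (simp add: powr_divide)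
          have Bs: "B s \<le> B t * (t/s) powr p"
          proof -
            have "B s \<le> (dy / s powr (1/\<alpha>)) powr \<gamma>"
              unfolding B_def using dy0 sp g0 by (intro powr_mono2) auto
            also have "dy / s powr (1/\<alpha>) = (dy / t powr (1/\<alpha>)) * (t/s) powr (1/\<alpha>)"
              using tp sp tsa by (simp add: field_simps)
            also have "(\<dots>) powr \<gamma> = (dy / t powr (1/\<alpha>)) powr \<gamma> * ((t/s) powr (1/\<alpha>)) powr \<gamma>"
              using dy0 tp by (metis powr_mult divide_nonneg_nonneg less_imp_le powr_ge_zero)
            also have "\<dots> = B t * ((t/s) powr (1/\<alpha>)) powr \<gamma>" by (simp add: Bt)
            also have "((t/s) powr (1/\<alpha>)) powr \<gamma> = (t/s) powr p"
              by (simp add: powr_powr p_def)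
            finally show ?thesis .
          qed
          define W where "W = min 1 (dz / t powr (1/\<alpha>)) * (t/s) powr (1/\<alpha>)"
          have W0: "0 \<le> W" using dz0 tp by (simp add: W_def)
          have E: "A t * (t/s) powr p = W powr \<gamma>"
          proof -
            have "W powr \<gamma> = A t * ((t/s) powr (1/\<alpha>)) powr \<gamma>"
              unfolding W_def A_def using dz0 tp by (simp add: powr_mult)
            thus ?thesis by (simp add: powr_powr p_def)
          qed
          have Wle1: "W \<le> dz / s powr (1/\<alpha>)"
          proof -
            have "W \<le> (dz / t powr (1/\<alpha>)) * (t/s) powr (1/\<alpha>)"
              unfolding W_def by (intro mult_right_mono) auto
            also have "\<dots> = dz / s powr (1/\<alpha>)" using tsa tp by (simp add: field_simps)
            finally show ?thesis .
          qed
          have Wle2: "W \<le> (t/s) powr (1/\<alpha>)"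
            unfolding W_def using dz0 tp by (intro mult_left_le_one_le) auto
          have step1: "A t * (A s * B s * Q s) \<le> B t * (W powr \<gamma> * (A s * Q s))"
          proof -
            have "A t * (A s * B s * Q s) \<le> A t * (A s * (B t * (t/s) powr p) * Q s)"
              using Bs A01 Q0s by (intro mult_left_mono mult_right_mono) auto
            also have "\<dots> = B t * ((A t * (t/s) powr p) * (A s * Q s))" by (simp add: mult_ac)
            finally show ?thesis by (simp add: E)
          qed
          show ?thesis
          proof (cases "s < m")
            case True
            have "W \<le> (2*m/s) powr (1/\<alpha>)"
            proof (cases "m = T")
              case True
              hence "t = 2*m" by (simp add: T_def)
              thus ?thesis using Wle2 by simp
            next
              case False
              hence mdz: "m = dz powr \<alpha>" by (simp add: m_def min_def split: if_splits)
              have "dz = m powr (1/\<alpha>)" using mdz dzpos assms by (simp add: powr_powr)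
              hence "W \<le> (m/s) powr (1/\<alpha>)" using Wle1 m0 s0 by (simp add: powr_divide)
              also have "\<dots> \<le> (2*m/s) powr (1/\<alpha>)" using m0 s0 assms
                by (intro powr_mono2) (auto simp: divide_right_mono)
              finally show ?thesis .
            qed
            hence "W powr \<gamma> \<le> ((2*m/s) powr (1/\<alpha>)) powr \<gamma>"
              using W0 g0 by (intro powr_mono2) auto
            also have "\<dots> = 2 powr p * m powr p / s powr p"
              using m0 s0 by (simp add: powr_powr p_def powr_divide powr_mult)
            finally have Wg: "W powr \<gamma> \<le> 2 powr p * m powr p / s powr p" .
            have "W powr \<gamma> * (A s * Q s) \<le> (2 powr p * m powr p / s powr p) * (s / L)"
              using Wg A01[of s] Q0s Qle by (intro mult_mono) (auto simp: mult_le_one order_trans[OF mult_left_le_one_le])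
            also have "\<dots> = k1 * s powr (1-p)"
              using s0 by (simp add: k1_def powr_diff)
            finally have "W powr \<gamma> * (A s * Q s) \<le> A s * Q s + indicator {0<..<m} s * (k1 * s powr (1-p))"
              using True s0 A01[of s] Q0s by (simp add: add_increasing)
            thus ?thesis using step1 B01[of t] by (meson mult_left_mono order_trans)
          next
            case False
            hence "m \<noteq> T" using sT by auto
            hence mdz: "m = dz powr \<alpha>" by (simp add: m_def min_def split: if_splits)
            have "dz = (dz powr \<alpha>) powr (1/\<alpha>)" using dzpos assms by (simp add: powr_powr)
            also have "\<dots> \<le> s powr (1/\<alpha>)" using False mdz dzpos assms by (intro powr_mono2) auto
            finally have "dz / s powr (1/\<alpha>) \<le> 1" using sp by simp
            hence "W \<le> 1" using Wle1 by simp
            hence "W powr \<gamma> \<le> 1" using W0 g0 by (intro powr_le_one')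
            hence "W powr \<gamma> * (A s * Q s) \<le> A s * Q s + indicator {0<..<m} s * (k1 * s powr (1-p))"
              using False A01[of s] Q0s by (simp add: mult_left_le_one_le)
            thus ?thesis using step1 B01[of t] by (meson mult_left_mono order_trans)
          qed
        qed
        have P2: "indicator {0<..<m} s * (s / M) \<le> A s * Q s" if s0: "0 < s" for s
        proof (cases "s < m")
          case True
          have "s powr (1/\<alpha>) < (dz powr \<alpha>) powr (1/\<alpha>)"
            using True s0 assms by (intro powr_less_mono2) (auto simp: m_def)
          hence sdz: "s powr (1/\<alpha>) < dz" using dzpos assms by (simp add: powr_powr)
          hence "A s = 1" using s0 by (simp add: A_def)
          moreover have "s / M \<le> s / L" using L0 LM s0 by (simp add: frac_le)
          moreover have "s / M \<le> s powr (- d/\<alpha>)"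
          proof -
            have "(s powr (1/\<alpha>)) powr (d+\<alpha>) \<le> M"
              unfolding M_def using sdz r2 dpos assms by (intro powr_mono2) auto
            moreover have "(s powr (1/\<alpha>)) powr (d+\<alpha>) = s * s powr (d/\<alpha>)"
            proof -
              have "(s powr (1/\<alpha>)) powr (d+\<alpha>) = s powr (d/\<alpha> + 1)"
                using assms by (simp add: powr_powr add_divide_distrib)
              also have "\<dots> = s powr (d/\<alpha>) * s powr 1" by (rule powr_add)
              finally show ?thesis using s0 by simp
            qed
            ultimately have "s * s powr (d/\<alpha>) \<le> M" by simp
            hence "s / M \<le> s / (s * s powr (d/\<alpha>))" using s0 M0 by (intro divide_left_mono) auto
            also have "\<dots> = s powr (- d/\<alpha>)" using s0 by (simp add: powr_minus divide_simps)
            finally show ?thesis .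
          qed
          ultimately show ?thesis using True s0 by (simp add: Qeq)
        next
          case False
          thus ?thesis using A01[of s] Q0[of s] s0 by simp
        qed
        have measAQ: "(\<lambda>s. ennreal (A s * Q s) * indicator S s) \<in> borel_measurable lborel"
          unfolding A_def Q_def qker_def S_def by measurable
        have measABQ: "(\<lambda>s. ennreal (A s * B s * Q s) * indicator S s) \<in> borel_measurable lborel"
          unfolding A_def B_def Q_def qker_def S_def by measurable
        have measH: "(\<lambda>s. ennreal (indicator {0<..<m} s * (k1 * s powr (1-p))) * indicator S s) \<in> borel_measurable lborel"
          unfolding S_def by measurable
        define X where "X = (\<integral>\<^sup>+ s \<in> S. ennreal (A s * Q s) \<partial>lborel)"
        define Y where "Y = (\<integral>\<^sup>+ s \<in> S. ennreal (indicator {0<..<m} s * (k1 * s powr (1-p))) \<partial>lborel)"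
        have "ennreal (A t) * (\<integral>\<^sup>+ s \<in> S. ennreal (A s * B s * Q s) \<partial>lborel)
            = (\<integral>\<^sup>+ s. ennreal (A t) * (ennreal (A s * B s * Q s) * indicator S s) \<partial>lborel)"
          by (rule nn_integral_cmult[symmetric, OF measABQ])
        also have "\<dots> = (\<integral>\<^sup>+ s \<in> S. ennreal (A t * (A s * B s * Q s)) \<partial>lborel)"
          using A01[of t] by (intro nn_integral_cong) (simp add: ennreal_mult' mult.assoc)
        also have "\<dots> \<le> (\<integral>\<^sup>+ s. ennreal (B t) * (ennreal (A s * Q s) * indicator S s
              + ennreal (indicator {0<..<m} s * (k1 * s powr (1-p))) * indicator S s) \<partial>lborel)"
        proof (intro nn_integral_mono)
          fix s
          show "ennreal (A t * (A s * B s * Q s)) * indicator S s \<le> ennreal (B t) * (ennreal (A s * Q s) * indicator S s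
              + ennreal (indicator {0<..<m} s * (k1 * s powr (1-p))) * indicator S s)"
          proof (cases "s \<in> S")
            case True
            hence s0: "0 < s" by (simp add: S_def)
            have "ennreal (A t * (A s * B s * Q s)) \<le> ennreal (B t * (A s * Q s + indicator {0<..<m} s * (k1 * s powr (1-p))))"
              using P1[OF True] by (rule ennreal_leI)
            also have "\<dots> = ennreal (B t) * (ennreal (A s * Q s) + ennreal (indicator {0<..<m} s * (k1 * s powr (1-p))))"
              using B01[of t] A01[of s] Q0[of s] s0 k10
              by (simp add: ennreal_mult' ennreal_plus[symmetric])
            finally show ?thesis using True by simp
          qed simp
        qed
        also have "\<dots> = ennreal (B t) * (X + Y)"
          unfolding X_def Y_def
          by (subst nn_integral_cmult) (auto intro!: borel_measurable_add measAQ[unfolded measurable_lborel2] measH[unfolded measurable_lborel2] simp: nn_integral_add[OF measAQ measH])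
        also have "Y \<le> ennreal K * X"
        proof -
          have "Y = (\<integral>\<^sup>+ s. ennreal k1 * (ennreal (s powr (1-p)) * indicator {0<..<m} s) \<partial>lborel)"
            unfolding Y_def using mT k10
            by (intro nn_integral_cong) (auto simp: ST ennreal_mult' split: split_indicator)
          also have "\<dots> = ennreal k1 * ennreal (m powr (2-p)/(2-p))"
            by (subst nn_integral_cmult) (auto simp: int_powr[OF p2 m0])
          also have "\<dots> = ennreal (K * (1/M * (m^2/2)))"
          proof -
            have "m powr p * m powr (2-p) = m^2" using m0 by (simp add: powr_add[symmetric] powr_numeral)
            hence "k1 * (m powr (2-p)/(2-p)) = K * (1/M * (m^2/2))"
              unfolding k1_def K_def M2 using L0 p2 by (simp add: field_simps)
            thus ?thesis using k10 by (simp add: ennreal_mult'[symmetric])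
          qed
          also have "\<dots> = ennreal K * (ennreal (1/M) * ennreal (m^2/2))"
          proof -
            have h1: "0 \<le> 1/M" "0 \<le> m^2/2" using M0 by auto
            have "ennreal (1/M) * ennreal (m^2/2) = ennreal (1/M * (m^2/2))"
              by (rule ennreal_mult[OF h1, symmetric])
            moreover have "ennreal K * ennreal (1/M * (m^2/2)) = ennreal (K * (1/M * (m^2/2)))"
              by (rule ennreal_mult[symmetric]) (use h1 K0 in auto)
            ultimately show ?thesis by simp
          qed
          also have "ennreal (1/M) * ennreal (m^2/2) = (\<integral>\<^sup>+ s. ennreal (1/M) * (ennreal s * indicator {0<..<m} s) \<partial>lborel)"
            by (subst nn_integral_cmult) (auto simp: int_lin[OF m0])
          also have "\<dots> \<le> X"
            unfolding X_def
          proof (intro nn_integral_mono)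
            fix s
            show "ennreal (1/M) * (ennreal s * indicator {0<..<m} s) \<le> ennreal (A s * Q s) * indicator S s"
            proof (cases "s \<in> {0<..<m}")
              case True
              hence "s \<in> S" using mT ST by auto
              moreover have "ennreal (1/M) * ennreal s = ennreal (indicator {0<..<m} s * (s / M))"
                using True M0 by (simp add: ennreal_mult'[symmetric])
              moreover have "ennreal (indicator {0<..<m} s * (s / M)) \<le> ennreal (A s * Q s)"
                using P2[of s] True by (intro ennreal_leI) auto
              ultimately show ?thesis using True by simp
            qed simp
          qed
          finally show ?thesis by (simp add: mult_left_mono)
        qed
        hence "ennreal (B t) * (X + Y) \<le> ennreal (B t) * (X + ennreal K * X)"
          by (intro mult_left_mono add_left_mono) auto
        also have "\<dots> = ennreal (B t * (1 + K)) * X"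
          using B01[of t] K0 by (simp add: ennreal_mult' ennreal_plus[symmetric] distrib_right algebra_simps)
        also have "\<dots> \<le> ennreal (C1 * B t) * X"
          using C1g B01[of t] by (intro mult_right_mono ennreal_leI) (auto, metis mult.commute mult_left_mono)
        finally show ?thesis unfolding X_def .
      qed
      then show ?thesis using nonempty
        by (simp add: rp psi_def bdry_ratio_def A_def B_def Q_def S_def dz_def dy_def)
    qed
  qed
qed

end
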